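(* Fix an architecture $(\mathbf d,\mathbf k,\mathbf s)$ of depth $N$, a loss $\ell:\mathbb{R}^{d_N}\times\mathbb{R}^{d_N}\to\mathbb{R}$, and data $X=(x_1,\dots,x_m)\in\mathbb{R}^{d_0\times m}$, $Y=(y_1,\dots,y_m)\in\mathbb{R}^{d_N\times m}$, and let $\mathcal{L}(\vec w)=\sum_{i=1}^m\ell(\Pi(\vec w)x_i,y_i)$. Assume that $XX^\top$ has full rank and that there is a constant $c\in\mathbb{R}$ such that for all $x\in\mathbb{R}^{d_0}$, $y\in\mathbb{R}^{d_N}$ and all $W\in\mathbb{R}^{d_N\times d_0}$, \[ \|Wx-y\|_1\le\ell(Wx,y)+c. \] Then there exists a non-decreasing function $g:\mathbb{R}\to\mathbb{R}_{\ge0}$ such that $\|\pi(\vec w)\|_1\le g(\mathcal{L}(\vec w))$ for all $\vec w\in\mathbb{R}^{\sum_{i=1}^N k_i}$.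
   Context: An architecture of depth $N$ is a triple $(\mathbf d,\mathbf k,\mathbf s)=((d_0,\dots,d_N),(k_1,\dots,k_N),(s_1,\dots,s_N))$ of positive integers with $d_i=\frac{d_{i-1}-k_i}{s_i}+1$. For a filter $w\in\mathbb{R}^{k}$ and stride $s$, the convolutional matrix $\Pi_{(d',d''),k,s}(w)\in\mathbb{R}^{d''\times d'}$ has entries $W_{j,(j-1)s+n}=w_n$ ($j\le d''$, $n\le k$) and zeros elsewhere. For $\vec w=(w^{(1)},\dots,w^{(N)})$, $w^{(i)}\in\mathbb{R}^{k_i}$, $\Pi(\vec w):=W_N\cdots W_1$ with $W_i=\Pi_{(d_{i-1},d_i),k_i,s_i}(w^{(i)})$; this is a convolutional matrix with stride $\prod_i s_i$ and filter width $k_v=k_1+\sum_{i=2}^N(k_i-1)\prod_{m=1}^{i-1}s_m$, and its filter is denoted $\pi(\vec w)\in\mathbb{R}^{k_v}$. $\|\cdot\|_1$ is the $\ell_1$-norm of a vector. *)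

theory Defs
  imports "Jordan_Normal_Form.DL_Rank"
begin

definition architecture :: "nat \<Rightarrow> (nat \<Rightarrow> nat) \<Rightarrow> (nat \<Rightarrow> nat) \<Rightarrow> (nat \<Rightarrow> nat) \<Rightarrow> bool" where
  "architecture N d k s \<longleftrightarrow> N \<ge> 1 \<and> (\<forall>i\<le>N. d i > 0) \<and>
     (\<forall>i\<in>{1..N}. k i > 0 \<and> s i > 0 \<and>
        real (d i) = (real (d (i - 1)) - real (k i)) / real (s i) + 1)"

text \<open>Convolutional matrix Pi_{(d',d''),k,s}(w) in R^{d'' x d'} (0-indexed):
  entry (j,p) is w_n if p = j*s + n with n < k, and 0 otherwise.\<close>
definition conv_mat :: "nat \<Rightarrow> nat \<Rightarrow> nat \<Rightarrow> nat \<Rightarrow> real vec \<Rightarrow> real mat" where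
  "conv_mat d' d'' k s w = mat d'' d'
     (\<lambda>(j, p). if j * s \<le> p \<and> p - j * s < k then w $ (p - j * s) else 0)"

text \<open>Parameters: a list ws of N filters, ws ! (i-1) = w^(i) in R^{k i}.\<close>
definition valid_params :: "nat \<Rightarrow> (nat \<Rightarrow> nat) \<Rightarrow> real vec list \<Rightarrow> bool" where
  "valid_params N k ws \<longleftrightarrow> length ws = N \<and> (\<forall>i<N. dim_vec (ws ! i) = k (Suc i))"

fun Pi_partial :: "(nat \<Rightarrow> nat) \<Rightarrow> (nat \<Rightarrow> nat) \<Rightarrow> (nat \<Rightarrow> nat) \<Rightarrow> real vec list \<Rightarrow> nat \<Rightarrow> real mat" where
  "Pi_partial d k s ws 0 = 1\<^sub>m (d 0)"
| "Pi_partial d k s ws (Suc i) =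
     conv_mat (d i) (d (Suc i)) (k (Suc i)) (s (Suc i)) (ws ! i) * Pi_partial d k s ws i"

definition Pi_net :: "nat \<Rightarrow> (nat \<Rightarrow> nat) \<Rightarrow> (nat \<Rightarrow> nat) \<Rightarrow> (nat \<Rightarrow> nat) \<Rightarrow> real vec list \<Rightarrow> real mat" where
  "Pi_net N d k s ws = Pi_partial d k s ws N"

definition filter_width :: "nat \<Rightarrow> (nat \<Rightarrow> nat) \<Rightarrow> (nat \<Rightarrow> nat) \<Rightarrow> nat" where
  "filter_width N k s = k 1 + (\<Sum>i=2..N. (k i - 1) * (\<Prod>m=1..i-1. s m))"

text \<open>The filter pi(w) of the convolutional matrix Pi(w): its first row, entries 0..k_v-1.\<close>
definition pi_filter :: "nat \<Rightarrow> (nat \<Rightarrow> nat) \<Rightarrow> (nat \<Rightarrow> nat) \<Rightarrow> (nat \<Rightarrow> nat) \<Rightarrow> real vec list \<Rightarrow> real vec" where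
  "pi_filter N d k s ws = vec (filter_width N k s) (\<lambda>n. Pi_net N d k s ws $$ (0, n))"

definition l1norm :: "real vec \<Rightarrow> real" where
  "l1norm v = (\<Sum>i<dim_vec v. \<bar>v $ i\<bar>)"

definition net_loss :: "nat \<Rightarrow> (nat \<Rightarrow> nat) \<Rightarrow> (nat \<Rightarrow> nat) \<Rightarrow> (nat \<Rightarrow> nat) \<Rightarrow>
    (real vec \<Rightarrow> real vec \<Rightarrow> real) \<Rightarrow> nat \<Rightarrow> real mat \<Rightarrow> real mat \<Rightarrow> real vec list \<Rightarrow> real" where
  "net_loss N d k s lossf m X Y ws = (\<Sum>i<m. lossf (Pi_net N d k s ws *\<^sub>v col X i) (col Y i))"

end

theory Submission
  imports Defs
begin

lemma nth_ge_nil: "\<not> i < length xs \<Longrightarrow> xs ! i = [] ! (i - length xs)"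
    by (metis append_Nil2 nth_append)

lemma oor: fixes W :: "'a mat" assumes "W \<in> carrier_mat nr nc" "0 < nr" "nc \<le> j"
  shows "W $$ (0,j) = [] ! (j - nc)"
  using assms unfolding carrier_mat_def
  apply transfer
  apply (auto simp: mk_mat_def undef_mat_def nth_append)
  apply (subst nth_ge_nil; simp)
  done

lemma conv_mat_carrier: "conv_mat d' d'' k s w \<in> carrier_mat d'' d'"
  unfolding conv_mat_def by auto

lemma Pi_partial_carrier: "Pi_partial d k s ws i \<in> carrier_mat (d i) (d 0)"
  by (induction i) (auto intro!: mult_carrier_mat[OF conv_mat_carrier])

lemma l1norm_ge_comp: "i < dim_vec v \<Longrightarrow> \<bar>v $ i\<bar> \<le> l1norm v"
  unfolding l1norm_def
  by (rule member_le_sum[where f = "\<lambda>i. \<bar>v $ i\<bar>"]) auto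

theorem corollary3p7:
  fixes N m :: nat and d k s :: "nat \<Rightarrow> nat"
    and lossf :: "real vec \<Rightarrow> real vec \<Rightarrow> real"
    and X Y :: "real mat" and c :: real
  assumes arch: "architecture N d k s"
    and X: "X \<in> carrier_mat (d 0) m" and Y: "Y \<in> carrier_mat (d N) m"
    and rank: "vec_space.rank (d 0) (X * X\<^sup>T) = d 0"
    and loss_bound: "\<And>x y W. x \<in> carrier_vec (d 0) \<Longrightarrow> y \<in> carrier_vec (d N) \<Longrightarrow>
                 W \<in> carrier_mat (d N) (d 0) \<Longrightarrow> l1norm (W *\<^sub>v x - y) \<le> lossf (W *\<^sub>v x) y + c"
  shows "\<exists>g :: real \<Rightarrow> real. mono g \<and> (\<forall>t. g t \<ge> 0) \<and>
           (\<forall>ws. valid_params N k ws \<longrightarrow>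
              l1norm (pi_filter N d k s ws) \<le> g (net_loss N d k s lossf m X Y ws))"
proof -
  define n0 where "n0 = d 0"
  define nN where "nN = d N"
  have nN0: "0 < nN" using arch unfolding architecture_def nN_def by auto
  define A where "A = X * X\<^sup>T"
  have A: "A \<in> carrier_mat n0 n0" using X unfolding A_def n0_def by auto
  have "det A \<noteq> 0" using vec_space.det_rank_iff[OF A] rank unfolding A_def n0_def by simp
  from det_non_zero_imp_unit[OF A this, of "()"]
  obtain B where B: "B \<in> carrier_mat n0 n0" and AB: "A * B = 1\<^sub>m n0"
    unfolding Units_def ring_mat_def by auto
  define Z where "Z = X\<^sup>T * B"
  have Z: "Z \<in> carrier_mat m n0" using X B unfolding Z_def n0_def by auto
  define M where "M = (\<Sum>i<m. \<Sum>p<n0. \<bar>Z $$ (i,p)\<bar>)"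
  have ZM: "\<bar>Z $$ (i,p)\<bar> \<le> M" if "i < m" "p < n0" for i p
  proof -
    have "\<bar>Z $$ (i,p)\<bar> \<le> (\<Sum>p<n0. \<bar>Z $$ (i,p)\<bar>)"
      by (rule member_le_sum[where f = "\<lambda>p. \<bar>Z $$ (i,p)\<bar>"]) (use that in auto)
    also have "\<dots> \<le> M" unfolding M_def
      by (rule member_le_sum[where f = "\<lambda>i. \<Sum>p<n0. \<bar>Z $$ (i,p)\<bar>"]) (use that in auto)
    finally show ?thesis .
  qed
  have M0: "0 \<le> M" unfolding M_def by (auto intro!: sum_nonneg)
  define Ky where "Ky = (\<Sum>i<m. \<bar>Y $$ (0,i)\<bar>)"
  define fw where "fw = filter_width N k s"
  define g where "g t = (\<Sum>n<fw. if n < n0 then M * max 0 (t + m * c + Ky)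
                          else \<bar>([]::real list) ! (n - n0)\<bar>)" for t
  show ?thesis
  proof (intro exI conjI allI impI)
    show "mono g" unfolding g_def
      by (intro monoI sum_mono) (auto intro!: mult_left_mono M0)
    show "0 \<le> g t" for t unfolding g_def
      by (intro sum_nonneg) (auto intro!: mult_nonneg_nonneg M0)
    fix ws assume vp: "valid_params N k ws"
    define W where "W = Pi_net N d k s ws"
    have W: "W \<in> carrier_mat nN n0" unfolding W_def Pi_net_def nN_def n0_def
      by (rule Pi_partial_carrier)
    define L where "L = net_loss N d k s lossf m X Y ws"
    define S where "S = (\<Sum>i<m. \<bar>(W * X) $$ (0,i)\<bar>)"
    have S0: "0 \<le> S" unfolding S_def by (auto intro!: sum_nonneg)
    have SL: "S \<le> L + m * c + Ky"
    proof -
      have "\<bar>(W * X) $$ (0,i)\<bar> \<le> lossf (W *\<^sub>v col X i) (col Y i) + c + \<bar>Y $$ (0,i)\<bar>"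
        if i: "i < m" for i
      proof -
        have e: "(W * X) $$ (0,i) = (W *\<^sub>v col X i - col Y i) $ 0 + Y $$ (0,i)"
          using W X Y i nN0 by (auto simp: n0_def nN_def)
        have "\<bar>(W *\<^sub>v col X i - col Y i) $ 0\<bar> \<le> l1norm (W *\<^sub>v col X i - col Y i)"
          by (rule l1norm_ge_comp) (use W Y nN0 in \<open>auto simp: nN_def\<close>)
        also have "\<dots> \<le> lossf (W *\<^sub>v col X i) (col Y i) + c"
          by (rule loss_bound) (use W X Y i in \<open>auto simp: n0_def nN_def\<close>)
        finally show ?thesis unfolding e by linarith
      qed
      then have "S \<le> (\<Sum>i<m. lossf (W *\<^sub>v col X i) (col Y i) + c + \<bar>Y $$ (0,i)\<bar>)"
        unfolding S_def by (intro sum_mono) auto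
      also have "\<dots> = L + m * c + Ky"
        unfolding L_def net_loss_def Ky_def W_def by (simp add: sum.distrib)
      finally show ?thesis .
    qed
    have Wp: "\<bar>W $$ (0,p)\<bar> \<le> M * max 0 (L + m * c + Ky)" if p: "p < n0" for p
    proof -
      have "W = W * (A * B)" using W AB by simp
      also have "\<dots> = W * (X * (X\<^sup>T * B))" unfolding A_def
        using X B by (subst assoc_mult_mat[of X n0 m _ n0 B n0]) (auto simp: n0_def)
      also have "\<dots> = (W * X) * Z" unfolding Z_def
        using W X B by (subst assoc_mult_mat[of W nN n0 X m]) (auto simp: n0_def)
      finally have "W $$ (0,p) = ((W * X) * Z) $$ (0,p)" by simp
      also have "\<dots> = row (W * X) 0 \<bullet> col Z p"
        using W X Z p nN0 by (subst index_mult_mat) (auto simp: n0_def)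
      also have "\<dots> = (\<Sum>i<m. (W * X) $$ (0,i) * Z $$ (i,p))"
        using W X Z p nN0 unfolding scalar_prod_def
        by (auto simp: atLeast0LessThan n0_def intro!: sum.cong)
      finally have "\<bar>W $$ (0,p)\<bar> \<le> (\<Sum>i<m. \<bar>(W * X) $$ (0,i)\<bar> * M)"
        using ZM p by (auto intro!: order.trans[OF sum_abs] sum_mono simp: abs_mult intro!: mult_left_mono)
      also have "\<dots> = M * S" unfolding S_def by (simp add: sum_distrib_left mult.commute)
      also have "\<dots> \<le> M * max 0 (L + m * c + Ky)" using SL M0 by (intro mult_left_mono) auto
      finally show ?thesis .
    qed
    have "l1norm (pi_filter N d k s ws) = (\<Sum>n<fw. \<bar>W $$ (0,n)\<bar>)"
      unfolding l1norm_def pi_filter_def W_def fw_def by simp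
    also have "\<dots> \<le> g L" unfolding g_def
    proof (intro sum_mono)
      fix n assume "n \<in> {..<fw}"
      show "\<bar>W $$ (0,n)\<bar> \<le> (if n < n0 then M * max 0 (L + m * c + Ky)
                          else \<bar>([]::real list) ! (n - n0)\<bar>)"
        using Wp oor[OF W nN0, of n] by auto
    qed
    finally show "l1norm (pi_filter N d k s ws) \<le> g (net_loss N d k s lossf m X Y ws)"
      unfolding L_def .
  qed
qed

end
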